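(* Let $\varphi:U\times U\to V$ be a fully-regular alternating bilinear map. Then $\mathcal{S}_\varphi=\{\varphi(x,-)\mid x\in U\}\subseteq\mathcal{L}(U,V)$ has the column property, i.e. every matrix space representing it in some bases of $U$ and $V$ has the column property.
   Context: $U,V$ finite-dimensional over a field $\mathbb{K}$. $\varphi$ is fully-regular if $V$ is spanned by the values of $\varphi$ and $\varphi(x,-)\neq 0$ for every nonzero $x\in U$ (equivalently $\varphi(-,x)\ne0$, as $\varphi$ is alternating). Matrix spaces are equivalent ($\sim$) if $\mathcal{M}=P\mathcal{M}'Q$ with $P,Q$ invertible. A subspace is defective if none of its matrices has rank equal to its number of columns. $\mathcal{M}\subseteq\mathrm{Mat}_{m,n}(\mathbb{K})$ is $(r,s)$-decomposed ($0\le r\le m$, $1\le s\le n$) if every $M$ is of the form $\begin{bmatrix} ?_{r\times s}& C(M)\\ B(M)&0_{(m-r)\times(n-s)}\end{bmatrix}$, with lower space $B(\mathcal{M})$; $\mathcal{M}$ has the column property if every $(r,s)$-decomposed space equivalent to $\mathcal{M}$ has defective lower space. *)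

theory Defs
  imports "Jordan_Normal_Form.DL_Rank" "Jordan_Normal_Form.VS_Connect"
begin

text \<open>Coordinates: U = K^n, V = K^m, vectors of dimension n resp. m (JNF carrier_vec).
  Matrices are JNF matrices; spaces of matrices are sets of matrices.\<close>

definition alt_bilinear :: "nat \<Rightarrow> nat \<Rightarrow> ('a::field vec \<Rightarrow> 'a vec \<Rightarrow> 'a vec) \<Rightarrow> bool" where
  "alt_bilinear n m \<phi> \<longleftrightarrow>
     (\<forall>x\<in>carrier_vec n. \<forall>y\<in>carrier_vec n. \<phi> x y \<in> carrier_vec m) \<and>
     (\<forall>x\<in>carrier_vec n. \<forall>x'\<in>carrier_vec n. \<forall>y\<in>carrier_vec n. \<phi> (x + x') y = \<phi> x y + \<phi> x' y) \<and>
     (\<forall>x\<in>carrier_vec n. \<forall>y\<in>carrier_vec n. \<forall>y'\<in>carrier_vec n. \<phi> x (y + y') = \<phi> x y + \<phi> x y') \<and>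
     (\<forall>c. \<forall>x\<in>carrier_vec n. \<forall>y\<in>carrier_vec n. \<phi> (c \<cdot>\<^sub>v x) y = c \<cdot>\<^sub>v \<phi> x y) \<and>
     (\<forall>c. \<forall>x\<in>carrier_vec n. \<forall>y\<in>carrier_vec n. \<phi> x (c \<cdot>\<^sub>v y) = c \<cdot>\<^sub>v \<phi> x y) \<and>
     (\<forall>x\<in>carrier_vec n. \<phi> x x = 0\<^sub>v m)"

definition fully_regular :: "nat \<Rightarrow> nat \<Rightarrow> ('a::field vec \<Rightarrow> 'a vec \<Rightarrow> 'a vec) \<Rightarrow> bool" where
  "fully_regular n m \<phi> \<longleftrightarrow>
     LinearCombinations.module.span class_ring (module_vec TYPE('a) m)
        {\<phi> x y | x y. x \<in> carrier_vec n \<and> y \<in> carrier_vec n} = carrier_vec m \<and>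
     (\<forall>x\<in>carrier_vec n. x \<noteq> 0\<^sub>v n \<longrightarrow> (\<exists>y\<in>carrier_vec n. \<phi> x y \<noteq> 0\<^sub>v m))"

definition left_mat :: "nat \<Rightarrow> nat \<Rightarrow> ('a::field vec \<Rightarrow> 'a vec \<Rightarrow> 'a vec) \<Rightarrow> 'a vec \<Rightarrow> 'a mat" where
  "left_mat n m \<phi> x = mat m n (\<lambda>(i, j). \<phi> x (unit_vec n j) $ i)"

definition mat_space_equiv :: "nat \<Rightarrow> nat \<Rightarrow> 'a::field mat set \<Rightarrow> 'a mat set \<Rightarrow> bool" where
  "mat_space_equiv m n M M' \<longleftrightarrow>
     (\<exists>P Q. P \<in> carrier_mat m m \<and> Q \<in> carrier_mat n n \<and> invertible_mat P \<and> invertible_mat Q \<and>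
            M = (\<lambda>A. P * A * Q) ` M')"

definition decomposed :: "nat \<Rightarrow> nat \<Rightarrow> nat \<Rightarrow> nat \<Rightarrow> 'a::field mat set \<Rightarrow> bool" where
  "decomposed r s m n M \<longleftrightarrow> r \<le> m \<and> 1 \<le> s \<and> s \<le> n \<and> M \<subseteq> carrier_mat m n \<and>
     (\<forall>A\<in>M. \<forall>i j. r \<le> i \<longrightarrow> i < m \<longrightarrow> s \<le> j \<longrightarrow> j < n \<longrightarrow> A $$ (i, j) = 0)"

definition lower_space :: "nat \<Rightarrow> nat \<Rightarrow> nat \<Rightarrow> 'a::field mat set \<Rightarrow> 'a mat set" where
  "lower_space r s m M = (\<lambda>A. mat (m - r) s (\<lambda>(i, j). A $$ (i + r, j))) ` M"

definition defective :: "nat \<Rightarrow> nat \<Rightarrow> 'a::field mat set \<Rightarrow> bool" where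
  "defective k c L \<longleftrightarrow> (\<forall>A\<in>L. vec_space.rank k A \<noteq> c)"

definition column_property :: "nat \<Rightarrow> nat \<Rightarrow> 'a::field mat set \<Rightarrow> bool" where
  "column_property m n M \<longleftrightarrow>
     (\<forall>M' r s. mat_space_equiv m n M' M \<and> decomposed r s m n M' \<longrightarrow>
        defective (m - r) s (lower_space r s m M'))"

end

theory Submission
  imports Defs
begin

lemma rank_full_inj:
  fixes B :: "'a::field mat"
  assumes B: "B \<in> carrier_mat k c" and r: "vec_space.rank k B = c"
    and v: "v \<in> carrier_vec c" and Bv: "B *\<^sub>v v = 0\<^sub>v k"
  shows "v = 0\<^sub>v c"
proof -
  interpret vec_space "TYPE('a)" k .
  have d: "distinct (cols B)"
  proof (rule ccontr)
    assume nd: "\<not> distinct (cols B)"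
    obtain S where S: "maximal S (\<lambda>T. T \<subseteq> set (cols B) \<and> lin_indpt T)"
      using maximal_exists[of "(\<lambda>T. T \<subseteq> set (cols B) \<and> lin_indpt T)" "card (set (cols B))" "{}"]
      by (meson List.finite_set card_mono empty_iff empty_subsetI finite_lin_indpt2 rev_finite_subset)
    then have "card S \<le> card (set (cols B))" by (simp add: card_mono maximal_def)
    also have "\<dots> < length (cols B)" using nd card_distinct card_length nat_less_le by metis
    also have "\<dots> = c" using B by simp
    finally have "card S < c" .
    then show False using rank_card_indpt[OF B S] r by simp
  qed
  have li: "lin_indpt (set (cols B))" using full_rank_lin_indpt[OF B r d] .
  show ?thesis
  proof (rule ccontr)
    assume "v \<noteq> 0\<^sub>v c"
    then have "lin_dep (set (cols B))" using lin_depI[OF B v _ Bv d] by blast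
    with li show False by simp
  qed
qed

lemma mat_unit_entry:
  fixes A :: "'a::field mat"
  assumes "A \<in> carrier_mat m n" "i < m" "j < n"
  shows "(A *\<^sub>v unit_vec n j) $ i = A $$ (i,j)"
proof -
  have "row A i \<bullet> unit_vec n j = row A i $ j" using scalar_prod_right_unit[OF assms(3)] .
  then show ?thesis using assms by (simp add: mult_mat_vec_def)
qed

lemma inv_exists:
  assumes "Q \<in> carrier_mat n n" "invertible_mat Q"
  shows "\<exists>Qi \<in> carrier_mat n n. Q * Qi = 1\<^sub>m n \<and> Qi * Q = 1\<^sub>m n"
proof -
  obtain B where "Q * B = 1\<^sub>m (dim_row Q)" "B * Q = 1\<^sub>m (dim_row B)"
    using assms unfolding invertible_mat_def inverts_mat_def by blast
  then show ?thesis using assms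
    by (metis carrier_matD carrier_matI index_mult_mat(2,3) index_one_mat(2,3))
qed

lemma alt_zero:
  assumes "alt_bilinear n m \<phi>" "x \<in> carrier_vec n"
  shows "\<phi> x (0\<^sub>v n) = 0\<^sub>v m"
proof -
  have z: "0\<^sub>v n \<in> carrier_vec n" by simp
  have "\<phi> x (0 \<cdot>\<^sub>v 0\<^sub>v n) = 0 \<cdot>\<^sub>v \<phi> x (0\<^sub>v n)"
    using assms z unfolding alt_bilinear_def by blast
  moreover have "\<phi> x (0\<^sub>v n) \<in> carrier_vec m" using assms z unfolding alt_bilinear_def by blast
  moreover have "0 \<cdot>\<^sub>v 0\<^sub>v n = (0\<^sub>v n :: 'a vec)" by (intro eq_vecI) auto
  ultimately have e: "\<phi> x (0\<^sub>v n) = 0 \<cdot>\<^sub>v \<phi> x (0\<^sub>v n)" "\<phi> x (0\<^sub>v n) \<in> carrier_vec m" by auto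
  show ?thesis
  proof (rule eq_vecI)
    fix i assume "i < dim_vec (0\<^sub>v m :: 'a vec)"
    then have "i < m" by simp
    have "\<phi> x (0\<^sub>v n) $ i = (0 \<cdot>\<^sub>v \<phi> x (0\<^sub>v n)) $ i" using e(1) by metis
    also have "\<dots> = 0" using e(2) \<open>i < m\<close> by simp
    finally show "\<phi> x (0\<^sub>v n) $ i = 0\<^sub>v m $ i" using \<open>i < m\<close> by simp
  qed (use e in simp)
qed

lemma alt_antisym:
  assumes "alt_bilinear n m \<phi>" "x \<in> carrier_vec n" "y \<in> carrier_vec n" "i < m"
  shows "\<phi> x y $ i = - (\<phi> y x $ i)"
proof -
  have c: "\<And>a b. a \<in> carrier_vec n \<Longrightarrow> b \<in> carrier_vec n \<Longrightarrow> \<phi> a b \<in> carrier_vec m"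
    using assms unfolding alt_bilinear_def by blast
  have "\<phi> (x + y) (x + y) = \<phi> x (x + y) + \<phi> y (x + y)"
    using assms unfolding alt_bilinear_def by (meson add_carrier_vec)
  also have "\<dots> = (\<phi> x x + \<phi> x y) + (\<phi> y x + \<phi> y y)"
  proof -
    have "\<phi> x (x + y) = \<phi> x x + \<phi> x y" "\<phi> y (x + y) = \<phi> y x + \<phi> y y"
      using assms unfolding alt_bilinear_def by blast+
    then show ?thesis by simp
  qed
  finally have e: "\<phi> (x + y) (x + y) = (\<phi> x x + \<phi> x y) + (\<phi> y x + \<phi> y y)" .
  have z: "\<phi> (x + y) (x + y) = 0\<^sub>v m" "\<phi> x x = 0\<^sub>v m" "\<phi> y y = 0\<^sub>v m"
    using assms unfolding alt_bilinear_def by (meson add_carrier_vec)+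
  have "(\<phi> (x + y) (x + y)) $ i = \<phi> x y $ i + \<phi> y x $ i"
  proof -
    have "\<phi> x y \<in> carrier_vec m" "\<phi> y x \<in> carrier_vec m" using c assms by auto
    then show ?thesis unfolding e using assms z by simp
  qed
  then show ?thesis using z assms by (simp add: eq_neg_iff_add_eq_0)
qed

lemma left_mat_mult:
  assumes phi: "alt_bilinear n m \<phi>" and x: "x \<in> carrier_vec n" and v: "v \<in> carrier_vec n"
  shows "left_mat n m \<phi> x *\<^sub>v v = \<phi> x v"
proof -
  have c: "\<And>a b. a \<in> carrier_vec n \<Longrightarrow> b \<in> carrier_vec n \<Longrightarrow> \<phi> a b \<in> carrier_vec m"
    using assms unfolding alt_bilinear_def by blast
  define w where "w k = vec n (\<lambda>j. if j < k then v $ j else 0)" for k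
  have wc: "w k \<in> carrier_vec n" for k unfolding w_def by simp
  have main: "k \<le> n \<Longrightarrow> i < m \<Longrightarrow> \<phi> x (w k) $ i = (\<Sum>j<k. \<phi> x (unit_vec n j) $ i * v $ j)" for k i
  proof (induction k)
    case 0
    have "w 0 = 0\<^sub>v n" unfolding w_def by auto
    then show ?case using alt_zero[OF phi x] 0 by simp
  next
    case (Suc k)
    have "w (Suc k) = w k + v $ k \<cdot>\<^sub>v unit_vec n k"
      unfolding w_def using Suc by (intro eq_vecI) (auto simp: unit_vec_def less_Suc_eq)
    then have "\<phi> x (w (Suc k)) = \<phi> x (w k) + v $ k \<cdot>\<^sub>v \<phi> x (unit_vec n k)"
      using phi x wc unfolding alt_bilinear_def by (metis smult_carrier_vec unit_vec_carrier)
    then have "\<phi> x (w (Suc k)) $ i = \<phi> x (w k) $ i + v $ k * \<phi> x (unit_vec n k) $ i"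
    proof -
      have "\<phi> x (w k) \<in> carrier_vec m" "\<phi> x (unit_vec n k) \<in> carrier_vec m"
        using c[OF x wc] c[OF x unit_vec_carrier] by auto
      then show "\<phi> x (w (Suc k)) $ i = \<phi> x (w k) $ i + v $ k * \<phi> x (unit_vec n k) $ i"
        using \<open>\<phi> x (w (Suc k)) = _\<close> Suc by simp
    qed
    then show ?case using Suc by (simp add: mult.commute)
  qed
  have wn: "w n = v" unfolding w_def using v by auto
  show ?thesis
  proof (rule eq_vecI)
    show "dim_vec (left_mat n m \<phi> x *\<^sub>v v) = dim_vec (\<phi> x v)" using c[OF x v] by (simp add: left_mat_def)
    fix i assume "i < dim_vec (\<phi> x v)"
    then have i: "i < m" using c[OF x v] by simp
    have "(left_mat n m \<phi> x *\<^sub>v v) $ i = (\<Sum>j<n. \<phi> x (unit_vec n j) $ i * v $ j)"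
      using i v by (simp add: left_mat_def mult_mat_vec_def scalar_prod_def lessThan_atLeast0)
    also have "\<dots> = \<phi> x v $ i" using main[of n i] i wn by simp
    finally show "(left_mat n m \<phi> x *\<^sub>v v) $ i = \<phi> x v $ i" .
  qed
qed

lemma mat_vec_zero: "(A :: 'a::field mat) \<in> carrier_mat k n \<Longrightarrow> A *\<^sub>v 0\<^sub>v n = 0\<^sub>v k"
  by (intro eq_vecI) (auto simp: mult_mat_vec_def)

lemma mat_vec_entry:
  "(A :: 'a::field mat) \<in> carrier_mat k n \<Longrightarrow> v \<in> carrier_vec n \<Longrightarrow> i < k \<Longrightarrow>
   (A *\<^sub>v v) $ i = (\<Sum>j\<in>{0..<n}. A $$ (i,j) * v $ j)"
  by (simp add: mult_mat_vec_def scalar_prod_def)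

lemma left_mat_carrier: "left_mat n m \<phi> x \<in> carrier_mat m n"
  by (simp add: left_mat_def)

theorem mainTheorem16:
  fixes \<phi> :: "'a::field vec \<Rightarrow> 'a vec \<Rightarrow> 'a vec" and n m :: nat
  assumes "alt_bilinear n m \<phi>" and "fully_regular n m \<phi>"
  shows "\<forall>P Q. P \<in> carrier_mat m m \<and> Q \<in> carrier_mat n n \<and> invertible_mat P \<and> invertible_mat Q \<longrightarrow>
           column_property m n ((\<lambda>x. P * left_mat n m \<phi> x * Q) ` carrier_vec n)"
proof (intro allI impI)
  note phi = assms(1)
  have c: "\<And>a b. a \<in> carrier_vec n \<Longrightarrow> b \<in> carrier_vec n \<Longrightarrow> \<phi> a b \<in> carrier_vec m"
    using phi unfolding alt_bilinear_def by blast
  fix P Q :: "'a mat" assume PQ: "P \<in> carrier_mat m m \<and> Q \<in> carrier_mat n n \<and> invertible_mat P \<and> invertible_mat Q"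
  then have P: "P \<in> carrier_mat m m" and Q: "Q \<in> carrier_mat n n" and Qinv: "invertible_mat Q" by auto
  show "column_property m n ((\<lambda>x. P * left_mat n m \<phi> x * Q) ` carrier_vec n)"
    unfolding column_property_def
  proof (intro allI impI)
    fix M' :: "'a mat set" and r s :: nat
    assume H: "mat_space_equiv m n M' ((\<lambda>x. P * left_mat n m \<phi> x * Q) ` carrier_vec n) \<and> decomposed r s m n M'"
    then obtain P' Q' where P': "P' \<in> carrier_mat m m" and Q': "Q' \<in> carrier_mat n n"
      and Q'inv: "invertible_mat Q'"
      and M': "M' = (\<lambda>A. P' * A * Q') ` ((\<lambda>x. P * left_mat n m \<phi> x * Q) ` carrier_vec n)"
      unfolding mat_space_equiv_def by blast
    have dec: "r \<le> m" "1 \<le> s" "s \<le> n"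
      and dz: "\<And>A i j. A \<in> M' \<Longrightarrow> r \<le> i \<Longrightarrow> i < m \<Longrightarrow> s \<le> j \<Longrightarrow> j < n \<Longrightarrow> A $$ (i, j) = 0"
      using H unfolding decomposed_def by auto
    define Am where "Am x = P' * (P * left_mat n m \<phi> x * Q) * Q'" for x
    define T where "T z = Q *\<^sub>v (Q' *\<^sub>v z)" for z
    have Amc: "Am x \<in> carrier_mat m n" for x
      unfolding Am_def using P P' Q Q' left_mat_carrier[of n m \<phi> x] by auto
    have Tc: "z \<in> carrier_vec n \<Longrightarrow> T z \<in> carrier_vec n" for z
      unfolding T_def using Q Q' by auto
    have Amv: "Am x *\<^sub>v z = P' *\<^sub>v (P *\<^sub>v \<phi> x (T z))"
      if x: "x \<in> carrier_vec n" and z: "z \<in> carrier_vec n" for x z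
    proof -
      have L: "left_mat n m \<phi> x \<in> carrier_mat m n" by (rule left_mat_carrier)
      have "Am x *\<^sub>v z = P' *\<^sub>v (P *\<^sub>v (left_mat n m \<phi> x *\<^sub>v (Q *\<^sub>v (Q' *\<^sub>v z))))"
      proof -
        have PL: "P * left_mat n m \<phi> x \<in> carrier_mat m n" using P L by simp
        have X: "P * left_mat n m \<phi> x * Q \<in> carrier_mat m n" using PL Q by simp
        have Q'z: "Q' *\<^sub>v z \<in> carrier_vec n" using Q' z by simp
        have Qw: "Q *\<^sub>v (Q' *\<^sub>v z) \<in> carrier_vec n" using Q Q'z by simp
        have "Am x *\<^sub>v z = (P' * (P * left_mat n m \<phi> x * Q)) *\<^sub>v (Q' *\<^sub>v z)"
          unfolding Am_def by (rule assoc_mult_mat_vec[OF mult_carrier_mat[OF P' X] Q' z])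
        also have "\<dots> = P' *\<^sub>v ((P * left_mat n m \<phi> x * Q) *\<^sub>v (Q' *\<^sub>v z))"
          by (rule assoc_mult_mat_vec[OF P' X Q'z])
        also have "(P * left_mat n m \<phi> x * Q) *\<^sub>v (Q' *\<^sub>v z) = (P * left_mat n m \<phi> x) *\<^sub>v (Q *\<^sub>v (Q' *\<^sub>v z))"
          by (rule assoc_mult_mat_vec[OF PL Q Q'z])
        also have "\<dots> = P *\<^sub>v (left_mat n m \<phi> x *\<^sub>v (Q *\<^sub>v (Q' *\<^sub>v z)))"
          by (rule assoc_mult_mat_vec[OF P L Qw])
        finally show ?thesis .
      qed
      also have "\<dots> = P' *\<^sub>v (P *\<^sub>v \<phi> x (T z))"
        using left_mat_mult[OF phi x Tc[OF z]] unfolding T_def by simp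
      finally show ?thesis .
    qed
    have AmM: "x \<in> carrier_vec n \<Longrightarrow> Am x \<in> M'" for x unfolding M' Am_def by blast
    have AmZ: "x \<in> carrier_vec n \<Longrightarrow> r \<le> i \<Longrightarrow> i < m \<Longrightarrow> s \<le> j \<Longrightarrow> j < n \<Longrightarrow> Am x $$ (i, j) = 0" for x i j
      using dz AmM by blast
    obtain Qi where Qi: "Qi \<in> carrier_mat n n" "Q * Qi = 1\<^sub>m n" using inv_exists[OF Q Qinv] by blast
    obtain Q'i where Q'i: "Q'i \<in> carrier_mat n n" "Q' * Q'i = 1\<^sub>m n" using inv_exists[OF Q' Q'inv] by blast
    have Tsurj: "x \<in> carrier_vec n \<Longrightarrow> \<exists>y \<in> carrier_vec n. T y = x" for x
    proof -
      assume x: "x \<in> carrier_vec n"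
      define y where "y = Q'i *\<^sub>v (Qi *\<^sub>v x)"
      have w: "Qi *\<^sub>v x \<in> carrier_vec n" using Qi x by simp
      have "Q' *\<^sub>v (Q'i *\<^sub>v (Qi *\<^sub>v x)) = (Q' * Q'i) *\<^sub>v (Qi *\<^sub>v x)"
        using assoc_mult_mat_vec[OF Q' Q'i(1) w] by simp
      also have "\<dots> = Qi *\<^sub>v x" using Q'i w by simp
      finally have "T y = Q *\<^sub>v (Qi *\<^sub>v x)" unfolding T_def y_def by simp
      also have "\<dots> = (Q * Qi) *\<^sub>v x" using assoc_mult_mat_vec[OF Q Qi(1) x] by simp
      also have "\<dots> = x" using Qi x by simp
      finally show ?thesis using Q'i Qi x unfolding y_def by auto
    qed
    show "defective (m - r) s (lower_space r s m M')"
      unfolding defective_def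
    proof
      fix B assume "B \<in> lower_space r s m M'"
      then obtain x where x: "x \<in> carrier_vec n" and B: "B = mat (m - r) s (\<lambda>(i, j). Am x $$ (i + r, j))"
        unfolding lower_space_def M' Am_def by blast
      have Bc: "B \<in> carrier_mat (m - r) s" unfolding B by simp
      show "vec_space.rank (m - r) B \<noteq> s"
      proof
        assume rk: "vec_space.rank (m - r) B = s"
        obtain y where y: "y \<in> carrier_vec n" "T y = x" using Tsurj[OF x] by blast
        have Amy: "Am x *\<^sub>v y = 0\<^sub>v m"
          using Amv[OF x y(1)] y(2) phi x P P' unfolding alt_bilinear_def
          by (simp add: mat_vec_zero)
        define y1 where "y1 = vec s (\<lambda>j. y $ j)"
        have "B *\<^sub>v y1 = 0\<^sub>v (m - r)"
        proof (rule eq_vecI)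
          fix i assume "i < dim_vec (0\<^sub>v (m - r) :: 'a vec)"
          then have i: "i < m - r" by simp
          have "(B *\<^sub>v y1) $ i = (\<Sum>j\<in>{0..<s}. Am x $$ (i + r, j) * y $ j)"
            using mat_vec_entry[OF Bc _ i, of y1] i unfolding y1_def B by simp
          also have "\<dots> = (\<Sum>j\<in>{0..<n}. Am x $$ (i + r, j) * y $ j)"
            by (rule sum.mono_neutral_left) (use dec i AmZ[OF x] in auto)
          also have "\<dots> = (Am x *\<^sub>v y) $ (i + r)"
            using mat_vec_entry[OF Amc y(1), of "i + r"] i by simp
          also have "\<dots> = 0" using Amy i by simp
          finally show "(B *\<^sub>v y1) $ i = 0\<^sub>v (m - r) $ i" using i by simp
        qed (use Bc in simp)
        then have "y1 = 0\<^sub>v s" using rank_full_inj[OF Bc rk] unfolding y1_def by simp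
        then have y0: "j < s \<Longrightarrow> y $ j = 0" for j unfolding y1_def by (metis index_vec index_zero_vec(1))
        have "B = 0\<^sub>m (m - r) s"
        proof (rule eq_matI)
          fix i j assume i: "i < dim_row (0\<^sub>m (m - r) s :: 'a mat)" and j: "j < dim_col (0\<^sub>m (m - r) s :: 'a mat)"
          then have i: "i < m - r" and j: "j < s" by auto
          define u where "u = T (unit_vec n j)"
          have u: "u \<in> carrier_vec n" unfolding u_def by (rule Tc) simp
          have anti: "\<phi> x u = (-1) \<cdot>\<^sub>v \<phi> u x"
            by (rule eq_vecI) (use c[OF x u] c[OF u x] alt_antisym[OF phi x u] in auto)
          have "B $$ (i, j) = Am x $$ (i + r, j)" unfolding B using i j by simp
          also have "\<dots> = (Am x *\<^sub>v unit_vec n j) $ (i + r)"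
            using mat_unit_entry[OF Amc, of "i + r" j] i j dec by simp
          also have "\<dots> = (P' *\<^sub>v (P *\<^sub>v \<phi> x u)) $ (i + r)"
            using Amv[OF x unit_vec_carrier] unfolding u_def by simp
          also have "\<dots> = ((-1) \<cdot>\<^sub>v (P' *\<^sub>v (P *\<^sub>v \<phi> u x))) $ (i + r)"
            unfolding anti using mult_mat_vec[OF P c[OF u x]] mult_mat_vec[OF P' mult_mat_vec_carrier[OF P c[OF u x]]]
            by simp
          also have "\<dots> = - ((Am u *\<^sub>v y) $ (i + r))"
            using Amv[OF u y(1)] y(2) i P P' c[OF u x] by simp
          also have "(Am u *\<^sub>v y) $ (i + r) = (\<Sum>k\<in>{0..<n}. Am u $$ (i + r, k) * y $ k)"
            using mat_vec_entry[OF Amc y(1), of "i + r"] i by simp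
          also have "\<dots> = 0"
          proof (rule sum.neutral, intro ballI)
            fix k assume "k \<in> {0..<n}"
            then show "Am u $$ (i + r, k) * y $ k = 0"
              using y0[of k] AmZ[OF u, of "i + r" k] i by (cases "k < s") auto
          qed
          finally show "B $$ (i, j) = 0\<^sub>m (m - r) s $$ (i, j)" using i j by simp
        qed (use Bc in auto)
        then have "vec_space.rank (m - r) B = 0" using vec_space.rank_0I by metis
        with rk dec show False by simp
      qed
    qed
  qed
qed

end
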